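(* Let $\beta=(\beta_1,\dots,\beta_k)$ be a weak composition. Let $n_1<n_2<\dots<n_k$ be positive integers, and set $n_0=0$. Then $$n_1^{\beta_1}n_2^{\beta_2}\cdots n_k^{\beta_k}=\sum_{I=(i_1,\dots,i_k)}c_{\beta,I}\binom{n_1-1}{i_1}\binom{n_2-n_1-1}{i_2}\cdots\binom{n_k-n_{k-1}-1}{i_k}.$$ The sum runs over all $I\in\mathbb N^k$ with $\sum_{t=j}^k i_t\le\sum_{t=j}^k\beta_t$ for $j=1,\dots,k$, and $\binom{m}{n}=0$ if $m<n$.
   Context: $\mathbb N$ denotes the nonnegative integers, and $[n]=\{1,\dots,n\}$ (empty if $n=0$). Filtered pointed Stirling numbers. For $\beta\in\mathbb N^k$ put $b_j=\beta_1+\dots+\beta_j$, $b_0=0$. For $I=(i_1,\dots,i_k)\in\mathbb N^k$ put $N_j=(i_1+1)+\dots+(i_j+1)$, $N_0=0$. Then $c_{\beta,I}$ is the number of maps $f:[b_k]\to[N_k]$ such that: - $f([b_j])\subseteq[N_j]$ for all $j=1,\dots,k$, and - $f([b_k])\cup\{N_1,\dots,N_k\}=[N_k]$. When $\beta=0^k$, only the empty map exists, so $c_{0^k,0^k}=1$. Equivalently, for any $n_1<\dots<n_k$ and subsets $Y_j\subseteq[n_{j-1}+1,n_j-1]$ with $|Y_j|=i_j$, $c_{\beta,I}$ is the number of maps $f:[b_k]\to[n_k]$ with $f([b_j])\subseteq[n_j]$ for all $j$ and $f([b_k])\cap[n_{j-1}+1,n_j-1]=Y_j$ for all $j$. For $k=1$,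 $c_{(m),(i)}=i!\,S(m+1,i+1)$ with $S$ the Stirling numbers of the second kind. *)

theory Defs
  imports Main "HOL-Library.FuncSet"
begin

text \<open>Compositions/index vectors are lists of length k; position j (0-based) is
  the paper's index j+1.  b_j = beta_1+...+beta_j, N_j = (i_1+1)+...+(i_j+1).\<close>

definition bpart :: "nat list \<Rightarrow> nat \<Rightarrow> nat" where
  "bpart beta j = sum_list (take j beta)"

definition Npart :: "nat list \<Rightarrow> nat \<Rightarrow> nat" where
  "Npart I j = sum_list (map Suc (take j I))"

definition cstir :: "nat list \<Rightarrow> nat list \<Rightarrow> nat" where
  "cstir beta I = (let k = length beta in
     card {f \<in> {1..bpart beta k} \<rightarrow>\<^sub>E {1..Npart I k}.
             (\<forall>j\<in>{1..k}. f ` {1..bpart beta j} \<subseteq> {1..Npart I j}) \<and>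
             f ` {1..bpart beta k} \<union> {Npart I j | j. j \<in> {1..k}} = {1..Npart I k}})"

end

theory Submission imports Defs begin

definition Cnt :: "(nat \<Rightarrow> nat) \<Rightarrow> (nat \<Rightarrow> nat) \<Rightarrow> nat \<Rightarrow> nat \<Rightarrow> nat \<Rightarrow> (nat \<Rightarrow> nat) set" where
  "Cnt B L k b N = {f \<in> {1..b} \<rightarrow>\<^sub>E {1..N}. (\<forall>j\<in>{1..k}. f ` {1..B j} \<subseteq> {1..L j}) \<and>
      f ` {1..b} \<union> L ` {1..k} = {1..N}}"

lemma finite_Cnt: "finite (Cnt B L k b N)"
  unfolding Cnt_def by (rule finite_subset[OF _ finite_PiE[of "{1..b}" "\<lambda>_. {1..N}"]]) auto

lemma Cnt_cong: "(\<And>j. j \<in> {1..k} \<Longrightarrow> L j = L' j) \<Longrightarrow> Cnt B L k b N = Cnt B L' k b N"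
proof -
  assume h: "\<And>j. j \<in> {1..k} \<Longrightarrow> L j = L' j"
  then have "L ` {1..k} = L' ` {1..k}" by (auto intro: image_cong)
  with h show ?thesis unfolding Cnt_def by auto
qed

lemma A1:
  assumes B: "\<forall>j\<in>{1..k}. B j \<le> b"
  shows "card {f \<in> Cnt B L k (Suc b) N. f (Suc b) \<in> f ` {1..b} \<union> L ` {1..k}} = N * card (Cnt B L k b N)"
proof -
  let ?A = "{f \<in> Cnt B L k (Suc b) N. f (Suc b) \<in> f ` {1..b} \<union> L ` {1..k}}"
  have "bij_betw (\<lambda>f. (f(Suc b := undefined), f (Suc b))) ?A (Cnt B L k b N \<times> {1..N})"
  proof (rule bij_betw_byWitness[where f'="\<lambda>(g,v). g(Suc b := v)"])
    show "\<forall>a\<in>?A. (\<lambda>(g, v). g(Suc b := v)) (a(Suc b := undefined), a (Suc b)) = a" by auto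
    show "\<forall>a'\<in>Cnt B L k b N \<times> {1..N}. (\<lambda>f. (f(Suc b := undefined), f (Suc b))) ((\<lambda>(g, v). g(Suc b := v)) a') = a'"
    proof
      fix a' assume "a' \<in> Cnt B L k b N \<times> {1..N}"
      then obtain g v where a': "a' = (g, v)" "g \<in> Cnt B L k b N" by auto
      then have "g (Suc b) = undefined" unfolding Cnt_def by (auto simp: PiE_def extensional_def)
      then show "(\<lambda>f. (f(Suc b := undefined), f (Suc b))) ((\<lambda>(g, v). g(Suc b := v)) a') = a'"
        using a' by auto
    qed
    show "(\<lambda>f. (f(Suc b := undefined), f (Suc b))) ` ?A \<subseteq> Cnt B L k b N \<times> {1..N}"
    proof (clarify, intro conjI)
      fix f assume f: "f \<in> Cnt B L k (Suc b) N" "f (Suc b) \<in> f ` {1..b} \<union> L ` {1..k}"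
      have im: "f(Suc b := undefined) ` {1..b} = f ` {1..b}" by auto
      have im2: "f(Suc b := undefined) ` {1..B j} = f ` {1..B j}" if "j \<in> {1..k}" for j
      proof -
        have "B j \<le> b" using B that by auto
        then show ?thesis by (intro image_cong) auto
      qed
      have "f ` {1..Suc b} = insert (f (Suc b)) (f ` {1..b})" by (auto simp: atLeastAtMostSuc_conv)
      then have "insert (f (Suc b)) (f ` {1..b} \<union> L ` {1..k}) = {1..N}"
        using f(1) unfolding Cnt_def by auto
      then have surj: "f ` {1..b} \<union> L ` {1..k} = {1..N}" using f(2) by (simp add: insert_absorb)
      have ext: "f(Suc b := undefined) \<in> {1..b} \<rightarrow>\<^sub>E {1..N}"
        using f(1) unfolding Cnt_def by (auto simp: PiE_def extensional_def Pi_def)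
      have "\<forall>j\<in>{1..k}. f ` {1..B j} \<subseteq> {1..L j}" using f(1) unfolding Cnt_def by auto
      then show "f(Suc b := undefined) \<in> Cnt B L k b N"
        unfolding Cnt_def using im2 surj ext by (auto simp: im)
      show "f (Suc b) \<in> {1..N}" using f unfolding Cnt_def by auto
    qed
    show "(\<lambda>(g, v). g(Suc b := v)) ` (Cnt B L k b N \<times> {1..N}) \<subseteq> ?A"
    proof (clarify, intro conjI)
      fix g v assume g: "g \<in> Cnt B L k b N" and v: "v \<in> {1..N}"
      have im: "g(Suc b := v) ` {1..b} = g ` {1..b}" by auto
      have im2: "g(Suc b := v) ` {1..B j} = g ` {1..B j}" if "j \<in> {1..k}" for j
      proof -
        have "B j \<le> b" using B that by auto
        then show ?thesis by (intro image_cong) auto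
      qed
      have "g(Suc b := v) ` {1..Suc b} = insert v (g ` {1..b})" by (auto simp: atLeastAtMostSuc_conv)
      with g v show "g(Suc b := v) \<in> Cnt B L k (Suc b) N"
        unfolding Cnt_def using im im2 by (auto simp: PiE_def extensional_def Pi_def)
      show "(g(Suc b := v)) (Suc b) \<in> g(Suc b := v) ` {1..b} \<union> L ` {1..k}"
        using g v im unfolding Cnt_def by auto
    qed
  qed
  then have "card ?A = card (Cnt B L k b N \<times> {1..N})" by (rule bij_betw_same_card)
  then show ?thesis by (simp add: card_cartesian_product)
qed

definition dl :: "nat \<Rightarrow> nat \<Rightarrow> nat" where "dl y x = (if x < y then x else x - 1)"
definition sg :: "nat \<Rightarrow> nat \<Rightarrow> nat" where "sg y x = (if x < y then x else Suc x)"

lemma sg_dl: "x \<noteq> y \<Longrightarrow> sg y (dl y x) = x" by (auto simp: sg_def dl_def)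
lemma dl_sg: "dl y (sg y w) = w" by (auto simp: sg_def dl_def)
lemma sg_ne: "sg y w \<noteq> y" by (auto simp: sg_def)
lemma memb: "x \<noteq> y \<Longrightarrow> 1 \<le> y \<Longrightarrow> M \<noteq> y \<Longrightarrow> (x \<in> {1..M}) = (dl y x \<in> {1..dl y M})"
  by (auto simp: dl_def)
lemma membs: "1 \<le> y \<Longrightarrow> M \<noteq> y \<Longrightarrow> (sg y w \<in> {1..M}) = (w \<in> {1..dl y M})"
  using memb[of "sg y w" y M] by (simp add: sg_ne dl_sg)
lemma dl_img: "1 \<le> y \<Longrightarrow> y < N \<Longrightarrow> dl y ` ({1..N} - {y}) = {1..N-1}"
proof
  assume y: "1 \<le> y" "y < N"
  have dN: "dl y N = N - 1" using y by (simp add: dl_def)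
  show "dl y ` ({1..N} - {y}) \<subseteq> {1..N-1}"
  proof
    fix w assume "w \<in> dl y ` ({1..N} - {y})"
    then obtain x where x: "x \<in> {1..N}" "x \<noteq> y" "w = dl y x" by blast
    then show "w \<in> {1..N-1}" using memb[of x y N] y dN by auto
  qed
  show "{1..N-1} \<subseteq> dl y ` ({1..N} - {y})"
  proof
    fix w assume w: "w \<in> {1..N-1}"
    have "sg y w \<in> {1..N}" using membs[of y N w] y dN w by auto
    then have "sg y w \<in> {1..N} - {y}" by (simp add: sg_ne)
    then show "w \<in> dl y ` ({1..N} - {y})" using dl_sg[of y w] by (metis image_eqI)
  qed
qed
lemma sg_img: "1 \<le> y \<Longrightarrow> y < N \<Longrightarrow> sg y ` {1..N-1} = {1..N} - {y}"
proof -
  assume y: "1 \<le> y" "y < N"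
  have "sg y ` {1..N-1} = sg y ` dl y ` ({1..N} - {y})" using dl_img[OF y] by simp
  also have "\<dots> = {1..N} - {y}" by (force simp: image_image sg_dl)
  finally show ?thesis .
qed

lemma A2:
  assumes B: "\<forall>j\<in>{1..k}. B j \<le> b" and y1: "1 \<le> y" and yN: "y < N" and yL: "y \<notin> L ` {1..k}"
  shows "card {f \<in> Cnt B L k (Suc b) N. f (Suc b) = y \<and> y \<notin> f ` {1..b}} = card (Cnt B (dl y \<circ> L) k b (N - 1))"
proof -
  let ?A = "{f \<in> Cnt B L k (Suc b) N. f (Suc b) = y \<and> y \<notin> f ` {1..b}}"
  let ?C = "Cnt B (dl y \<circ> L) k b (N - 1)"
  let ?P = "\<lambda>f. restrict (dl y \<circ> f) {1..b}"
  let ?Q = "\<lambda>g z. if z \<in> {1..b} then sg y (g z) else if z = Suc b then y else undefined"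
  have dN: "dl y N = N - 1" using yN by (simp add: dl_def)
  have Lne: "L j \<noteq> y" if "j \<in> {1..k}" for j using yL that by auto
  have Bj: "{1..B j} \<subseteq> {1..b}" if "j \<in> {1..k}" for j using B that by auto
  have Sb: "{1..Suc b} = insert (Suc b) {1..b}" by auto
  have "bij_betw ?P ?A ?C"
  proof (rule bij_betw_byWitness[where f'="?Q"])
    show "\<forall>f\<in>?A. ?Q (?P f) = f"
    proof
      fix f assume f: "f \<in> ?A"
      show "?Q (?P f) = f"
      proof
        fix z
        show "?Q (?P f) z = f z"
        proof (cases "z \<in> {1..b}")
          case True
          have "f z \<noteq> y" using f True by blast
          then show ?thesis using True by (simp add: sg_dl)
        next
          case False
          then show ?thesis using f unfolding Cnt_def by (auto simp: PiE_def extensional_def)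
        qed
      qed
    qed
    show "\<forall>g\<in>?C. ?P (?Q g) = g"
    proof
      fix g assume g: "g \<in> ?C"
      show "?P (?Q g) = g"
      proof
        fix z
        show "?P (?Q g) z = g z"
          using g unfolding Cnt_def by (auto simp: dl_sg PiE_def extensional_def)
      qed
    qed
    show "?P ` ?A \<subseteq> ?C"
    proof
      fix h assume "h \<in> ?P ` ?A"
      then obtain f where f: "f \<in> Cnt B L k (Suc b) N" "f (Suc b) = y" "y \<notin> f ` {1..b}" and h: "h = ?P f"
        by blast
      have fN: "f z \<in> {1..N}" if "z \<in> {1..Suc b}" for z using f(1) that unfolding Cnt_def by auto
      have fy: "f z \<noteq> y" if "z \<in> {1..b}" for z using f(3) that by blast
      have imP: "?P f ` S = dl y ` f ` S" if "S \<subseteq> {1..b}" for S using that by auto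
      have ext: "?P f \<in> {1..b} \<rightarrow>\<^sub>E {1..N-1}"
      proof
        fix z assume z: "z \<in> {1..b}"
        then have "f z \<in> {1..N}" using fN by auto
        then show "?P f z \<in> {1..N-1}" using memb[of "f z" y N] fy[OF z] y1 yN z dN by auto
      qed auto
      have con: "?P f ` {1..B j} \<subseteq> {1..(dl y \<circ> L) j}" if j: "j \<in> {1..k}" for j
      proof
        fix w assume "w \<in> ?P f ` {1..B j}"
        then obtain z where z: "z \<in> {1..B j}" "w = dl y (f z)" using Bj[OF j] by auto
        have "\<forall>j\<in>{1..k}. f ` {1..B j} \<subseteq> {1..L j}" using f(1) unfolding Cnt_def by blast
        then have "f z \<in> {1..L j}" using j z(1) by blast
        then show "w \<in> {1..(dl y \<circ> L) j}" using memb[of "f z" y "L j"] fy z Bj[OF j] y1 Lne[OF j] by auto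
      qed
      have "f ` {1..Suc b} \<union> L ` {1..k} = {1..N}" using f(1) unfolding Cnt_def by auto
      then have "insert y (f ` {1..b} \<union> L ` {1..k}) = {1..N}" using f(2) Sb by auto
      then have "f ` {1..b} \<union> L ` {1..k} = {1..N} - {y}" using f(3) yL by auto
      then have "dl y ` (f ` {1..b} \<union> L ` {1..k}) = {1..N-1}" using dl_img[OF y1 yN] by simp
      then have surj: "?P f ` {1..b} \<union> (dl y \<circ> L) ` {1..k} = {1..N-1}"
        using imP[of "{1..b}"] by (simp add: image_Un image_comp)
      show "h \<in> ?C" unfolding h Cnt_def using ext con surj by blast
    qed
    show "?Q ` ?C \<subseteq> ?A"
    proof
      fix h assume "h \<in> ?Q ` ?C"
      then obtain g where g: "g \<in> ?C" and h: "h = ?Q g" by blast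
      have gN: "g z \<in> {1..N-1}" if "z \<in> {1..b}" for z using g that unfolding Cnt_def by auto
      have imQ: "?Q g ` S = sg y ` g ` S" if "S \<subseteq> {1..b}" for S using that by auto
      have ext: "?Q g \<in> {1..Suc b} \<rightarrow>\<^sub>E {1..N}"
      proof
        fix z assume z: "z \<in> {1..Suc b}"
        show "?Q g z \<in> {1..N}"
        proof (cases "z \<in> {1..b}")
          case True
          then show ?thesis using membs[of y N "g z"] gN[OF True] y1 yN dN by auto
        next
          case False
          then show ?thesis using z y1 yN by auto
        qed
      qed auto
      have con: "?Q g ` {1..B j} \<subseteq> {1..L j}" if j: "j \<in> {1..k}" for j
      proof
        fix w assume "w \<in> ?Q g ` {1..B j}"
        then obtain z where z: "z \<in> {1..B j}" "w = sg y (g z)" using Bj[OF j] by auto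
        have "\<forall>j\<in>{1..k}. g ` {1..B j} \<subseteq> {1..(dl y \<circ> L) j}" using g unfolding Cnt_def by blast
        then have "g z \<in> {1..dl y (L j)}" using j z(1) by force
        then show "w \<in> {1..L j}" using membs[of y "L j" "g z"] z y1 Lne[OF j] by auto
      qed
      have "g ` {1..b} \<union> (dl y \<circ> L) ` {1..k} = {1..N-1}" using g unfolding Cnt_def by auto
      then have "sg y ` (g ` {1..b} \<union> (dl y \<circ> L) ` {1..k}) = {1..N} - {y}" using sg_img[OF y1 yN] by simp
      moreover have "sg y ` (dl y \<circ> L) ` {1..k} = L ` {1..k}"
        using Lne by (force simp: image_image sg_dl)
      ultimately have "sg y ` g ` {1..b} \<union> L ` {1..k} = {1..N} - {y}" by (simp add: image_Un)
      then have "?Q g ` {1..b} \<union> L ` {1..k} = {1..N} - {y}" using imQ[of "{1..b}"] by simp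
      moreover have "?Q g ` {1..Suc b} = insert y (?Q g ` {1..b})" unfolding Sb by auto
      ultimately have surj: "?Q g ` {1..Suc b} \<union> L ` {1..k} = {1..N}" using y1 yN by auto
      have con2: "\<forall>j\<in>{1..k}. ?Q g ` {1..B j} \<subseteq> {1..L j}" using con by blast
      have "?Q g \<in> Cnt B L k (Suc b) N" unfolding Cnt_def using ext con2 surj by blast
      moreover have "?Q g (Suc b) = y" by simp
      moreover have "y \<notin> sg y ` g ` {1..b}" using sg_ne by (metis imageE)
      ultimately show "h \<in> ?A" unfolding h using imQ[of "{1..b}"] by auto
    qed
  qed
  then show ?thesis by (rule bij_betw_same_card)
qed

lemma Rabs:
  assumes B: "\<forall>j\<in>{1..k}. B j \<le> b" and NL: "N \<in> L ` {1..k}"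
  shows "card (Cnt B L k (Suc b) N) = N * card (Cnt B L k b N) +
     (\<Sum>y\<in>{1..N} - L ` {1..k}. card (Cnt B (dl y \<circ> L) k b (N - 1)))"
proof -
  let ?A1 = "{f \<in> Cnt B L k (Suc b) N. f (Suc b) \<in> f ` {1..b} \<union> L ` {1..k}}"
  let ?A2 = "\<lambda>y. {f \<in> Cnt B L k (Suc b) N. f (Suc b) = y \<and> y \<notin> f ` {1..b}}"
  let ?G = "{1..N} - L ` {1..k}"
  have split: "Cnt B L k (Suc b) N = ?A1 \<union> (\<Union>y\<in>?G. ?A2 y)"
  proof
    show "Cnt B L k (Suc b) N \<subseteq> ?A1 \<union> (\<Union>y\<in>?G. ?A2 y)"
    proof
      fix f assume f: "f \<in> Cnt B L k (Suc b) N"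
      have "f (Suc b) \<in> {1..N}" using f unfolding Cnt_def by auto
      then show "f \<in> ?A1 \<union> (\<Union>y\<in>?G. ?A2 y)" using f by blast
    qed
  qed blast
  have disj: "?A1 \<inter> (\<Union>y\<in>?G. ?A2 y) = {}" by blast
  have fin: "finite (Cnt B L k (Suc b) N)" by (rule finite_Cnt)
  have "card (Cnt B L k (Suc b) N) = card ?A1 + card (\<Union>y\<in>?G. ?A2 y)"
    unfolding split[symmetric] using split disj fin
    by (metis (no_types, lifting) card_Un_disjoint finite_Un)
  also have "card ?A1 = N * card (Cnt B L k b N)" using A1[OF B] .
  also have "card (\<Union>y\<in>?G. ?A2 y) = (\<Sum>y\<in>?G. card (?A2 y))"
    by (rule card_UN_disjoint) (auto intro: finite_subset[OF _ fin])
  also have "\<dots> = (\<Sum>y\<in>?G. card (Cnt B (dl y \<circ> L) k b (N - 1)))"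
  proof (rule sum.cong)
    fix y assume y: "y \<in> ?G"
    have "y \<noteq> N" using y NL by auto
    then have "1 \<le> y" "y < N" "y \<notin> L ` {1..k}" using y by auto
    then show "card (?A2 y) = card (Cnt B (dl y \<circ> L) k b (N - 1))" using A2[OF B] by blast
  qed simp
  finally show ?thesis .
qed

lemma sl_take: "j \<le> length xs \<Longrightarrow> sum_list (map f (take j xs)) = (\<Sum>s<j. f (xs ! s))"
  by (induction j) (auto simp: take_Suc_conv_app_nth)

lemma Npart_sum: "j \<le> length I \<Longrightarrow> Npart I j = (\<Sum>s<j. Suc (I ! s))"
  unfolding Npart_def by (rule sl_take)

lemma bpart_sum: "j \<le> length I \<Longrightarrow> bpart I j = (\<Sum>s<j. I ! s)"
  unfolding bpart_def using sl_take[of j I id] by simp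

lemma Npart_Suc: "t < length I \<Longrightarrow> Npart I (Suc t) = Npart I t + Suc (I ! t)"
  by (simp add: Npart_sum)

lemma bpart_Suc: "t < length I \<Longrightarrow> bpart I (Suc t) = bpart I t + I ! t"
  by (simp add: bpart_sum)

lemma Npart_0[simp]: "Npart I 0 = 0" by (simp add: Npart_def)

lemma Npart_mono: "i \<le> j \<Longrightarrow> j \<le> length I \<Longrightarrow> Npart I i \<le> Npart I j"
  by (simp add: Npart_sum sum_mono2)

lemma Npart_smono: "i < j \<Longrightarrow> j \<le> length I \<Longrightarrow> Npart I i < Npart I j"
proof -
  assume a: "i < j" "j \<le> length I"
  then have "Npart I (Suc i) \<le> Npart I j" by (intro Npart_mono) auto
  moreover have "Npart I i < Npart I (Suc i)" using a by (simp add: Npart_Suc)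
  ultimately show ?thesis by simp
qed

lemma bpart_mono: "i \<le> j \<Longrightarrow> j \<le> length I \<Longrightarrow> bpart I i \<le> bpart I j"
  by (simp add: bpart_sum sum_mono2)

lemma bpart_app: "j \<le> length xs \<Longrightarrow> bpart (xs @ ys) j = bpart xs j"
  by (simp add: bpart_def)

lemma bpart_app_len: "bpart (xs @ [m]) (Suc (length xs)) = bpart xs (length xs) + m"
  by (simp add: bpart_def)

lemma Npart_upd: "t < length I \<Longrightarrow> j \<le> length I \<Longrightarrow>
   Npart (I[t:=v]) j + (if t < j then I!t else 0) = Npart I j + (if t < j then v else 0)"
proof (induction j)
  case 0
  then show ?case by simp
next
  case (Suc j)
  then have IH: "Npart (I[t:=v]) j + (if t < j then I!t else 0) = Npart I j + (if t < j then v else 0)" by simp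
  have "Npart (I[t:=v]) (Suc j) = Npart (I[t:=v]) j + Suc ((I[t:=v]) ! j)"
    using Suc.prems by (intro Npart_Suc) simp
  moreover have "Npart I (Suc j) = Npart I j + Suc (I ! j)" using Suc.prems by (intro Npart_Suc) simp
  moreover have "(I[t:=v]) ! j = (if t = j then v else I ! j)" using Suc.prems by simp
  ultimately show ?case using IH by (auto split: if_splits)
qed

lemma cstir_Cnt: "cstir beta I = card (Cnt (bpart beta) (Npart I) (length beta) (bpart beta (length beta)) (Npart I (length beta)))"
proof -
  have "{Npart I j |j. j \<in> {1..length beta}} = Npart I ` {1..length beta}" by blast
  then show ?thesis unfolding cstir_def Cnt_def Let_def by (simp only:)
qed

lemma Cnt_B_cong:
  assumes "\<forall>j\<in>{1..k}. B j = B' j \<or> (B j \<le> b \<and> B' j \<le> b \<and> L j = N)"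
  shows "Cnt B L k b N = Cnt B' L k b N"
proof -
  have "f ` {1..B j} \<subseteq> {1..L j} \<longleftrightarrow> f ` {1..B' j} \<subseteq> {1..L j}"
    if f: "f \<in> {1..b} \<rightarrow>\<^sub>E {1..N}" and j: "j \<in> {1..k}" for f j
  proof (cases "B j = B' j")
    case False
    then have h: "B j \<le> b" "B' j \<le> b" "L j = N" using assms j by auto
    have "f ` {1..c} \<subseteq> {1..L j}" if "c \<le> b" for c
    proof
      fix w assume "w \<in> f ` {1..c}"
      then obtain x where "x \<in> {1..c}" "w = f x" by blast
      then have "x \<in> {1..b}" "w = f x" using that by auto
      then show "w \<in> {1..L j}" using PiE_mem[OF f] h(3) by blast
    qed
    then show ?thesis using h by blast
  qed simp
  then have "\<And>f. f \<in> {1..b} \<rightarrow>\<^sub>E {1..N} \<Longrightarrow> (\<forall>j\<in>{1..k}. f ` {1..B j} \<subseteq> {1..L j}) = (\<forall>j\<in>{1..k}. f ` {1..B' j} \<subseteq> {1..L j})"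
    by (intro ball_cong) auto
  then show ?thesis unfolding Cnt_def
    by (intro Collect_cong conj_cong[OF refl] conj_cong[OF _ refl])
qed

lemma exists_gap: "(a::nat\<Rightarrow>nat) 0 < y \<Longrightarrow> y \<le> a k \<Longrightarrow> \<exists>t<k. a t < y \<and> y \<le> a (Suc t)"
proof (induction k)
  case 0
  then show ?case by simp
next
  case (Suc k)
  then show ?case
  proof (cases "y \<le> a k")
    case True
    then show ?thesis using Suc by (meson less_SucI)
  next
    case False
    then show ?thesis using Suc by auto
  qed
qed

lemma gaps: "{1..Npart I (length I)} - Npart I ` {1..length I} =
   (\<Union>t<length I. {Npart I t<..<Npart I (Suc t)})"
proof
  let ?k = "length I"
  show "{1..Npart I ?k} - Npart I ` {1..?k} \<subseteq> (\<Union>t<?k. {Npart I t<..<Npart I (Suc t)})"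
  proof
    fix y assume y: "y \<in> {1..Npart I ?k} - Npart I ` {1..?k}"
    then obtain t where t: "t < ?k" "Npart I t < y" "y \<le> Npart I (Suc t)"
      using exists_gap[of "Npart I" y ?k] by auto
    have "Suc t \<in> {1..?k}" using t by auto
    then have "y \<noteq> Npart I (Suc t)" using y by blast
    then show "y \<in> (\<Union>t<?k. {Npart I t<..<Npart I (Suc t)})" using t by auto
  qed
  show "(\<Union>t<?k. {Npart I t<..<Npart I (Suc t)}) \<subseteq> {1..Npart I ?k} - Npart I ` {1..?k}"
  proof
    fix y assume "y \<in> (\<Union>t<?k. {Npart I t<..<Npart I (Suc t)})"
    then obtain t where t: "t < ?k" "Npart I t < y" "y < Npart I (Suc t)" by auto
    have "Npart I (Suc t) \<le> Npart I ?k" using t by (intro Npart_mono) auto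
    then have "y \<in> {1..Npart I ?k}" using t by auto
    moreover have "y \<noteq> Npart I j" if "j \<in> {1..?k}" for j
    proof (cases "j \<le> t")
      case True
      then show ?thesis using Npart_mono[of j t I] t by auto
    next
      case False
      then show ?thesis using Npart_mono[of "Suc t" j I] t that by auto
    qed
    ultimately show "y \<in> {1..Npart I ?k} - Npart I ` {1..?k}" by blast
  qed
qed

lemma gap_dl:
  assumes t: "t < length I" and y: "Npart I t < y" "y < Npart I (Suc t)" and j: "j \<le> length I"
  shows "dl y (Npart I j) = Npart (I[t := I!t - 1]) j"
proof -
  have pos: "I ! t \<ge> 1" using y Npart_Suc[OF t] by auto
  have u: "Npart (I[t := I!t - 1]) j + (if t < j then I!t else 0) = Npart I j + (if t < j then I!t - 1 else 0)"
    using Npart_upd[OF t j] .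
  show ?thesis
  proof (cases "j \<le> t")
    case True
    then have "Npart I j < y" using Npart_mono[of j t I] t y by auto
    then show ?thesis using u True by (simp add: dl_def)
  next
    case False
    then have "Npart I j > y" using Npart_mono[of "Suc t" j I] j y by auto
    then show ?thesis using u False pos by (simp add: dl_def)
  qed
qed

lemma Rlist:
  assumes len: "length I = Suc (length bs)"
  shows "cstir (bs @ [Suc m]) I = Npart I (length I) * cstir (bs @ [m]) I +
     (\<Sum>t<length I. I!t * cstir (bs @ [m]) (I[t := I!t - 1]))"
proof -
  define k where "k = length I"
  define \<beta> where "\<beta> = bs @ [m]"
  define b where "b = bpart \<beta> k"
  define N where "N = Npart I k"
  have lb: "length \<beta> = k" "length (bs @ [Suc m]) = k" using len by (auto simp: k_def \<beta>_def)
  have k1: "1 \<le> k" using len k_def by simp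
  have bS: "bpart (bs @ [Suc m]) k = Suc b"
    using bpart_app_len[of bs "Suc m"] bpart_app_len[of bs m] len by (simp add: k_def b_def \<beta>_def)
  have c1: "cstir (bs @ [Suc m]) I = card (Cnt (bpart (bs @ [Suc m])) (Npart I) k (Suc b) N)"
    using cstir_Cnt[of "bs @ [Suc m]" I] lb bS by (simp add: N_def)
  have c2: "Cnt (bpart (bs @ [Suc m])) (Npart I) k (Suc b) N = Cnt (bpart \<beta>) (Npart I) k (Suc b) N"
  proof (rule Cnt_B_cong, rule ballI)
    fix j assume j: "j \<in> {1..k}"
    show "bpart (bs @ [Suc m]) j = bpart \<beta> j \<or> (bpart (bs @ [Suc m]) j \<le> Suc b \<and> bpart \<beta> j \<le> Suc b \<and> Npart I j = N)"
    proof (cases "j \<le> length bs")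
      case True
      then show ?thesis by (simp add: bpart_app \<beta>_def)
    next
      case False
      then have "j = k" using j len k_def by auto
      then show ?thesis using bS by (simp add: b_def N_def)
    qed
  qed
  have Bb: "\<forall>j\<in>{1..k}. bpart \<beta> j \<le> b" using lb by (auto simp: b_def intro: bpart_mono)
  have NL: "N \<in> Npart I ` {1..k}" using k1 N_def by auto
  have R: "card (Cnt (bpart \<beta>) (Npart I) k (Suc b) N) = N * card (Cnt (bpart \<beta>) (Npart I) k b N) +
     (\<Sum>y\<in>{1..N} - Npart I ` {1..k}. card (Cnt (bpart \<beta>) (dl y \<circ> Npart I) k b (N - 1)))"
    by (rule Rabs[OF Bb NL])
  have first: "card (Cnt (bpart \<beta>) (Npart I) k b N) = cstir \<beta> I"
    using cstir_Cnt[of \<beta> I] lb by (simp add: b_def N_def)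
  have G: "{1..N} - Npart I ` {1..k} = (\<Union>t<k. {Npart I t<..<Npart I (Suc t)})"
    using gaps[of I] by (simp add: N_def k_def)
  have disj: "\<forall>t1\<in>{..<k}. \<forall>t2\<in>{..<k}. t1 \<noteq> t2 \<longrightarrow>
      {Npart I t1<..<Npart I (Suc t1)} \<inter> {Npart I t2<..<Npart I (Suc t2)} = {}"
  proof (intro ballI impI)
    fix t1 t2 assume t: "t1 \<in> {..<k}" "t2 \<in> {..<k}" "t1 \<noteq> t2"
    show "{Npart I t1<..<Npart I (Suc t1)} \<inter> {Npart I t2<..<Npart I (Suc t2)} = {}"
    proof (cases "t1 < t2")
      case True
      then have "Npart I (Suc t1) \<le> Npart I t2" using t by (intro Npart_mono) (auto simp: k_def)
      then show ?thesis by auto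
    next
      case False
      then have "Npart I (Suc t2) \<le> Npart I t1" using t by (intro Npart_mono) (auto simp: k_def)
      then show ?thesis by auto
    qed
  qed
  have inner: "card (Cnt (bpart \<beta>) (dl y \<circ> Npart I) k b (N - 1)) = cstir \<beta> (I[t := I!t - 1])"
    if t: "t < k" and y: "y \<in> {Npart I t<..<Npart I (Suc t)}" for t y
  proof -
    have e: "dl y (Npart I j) = Npart (I[t := I!t - 1]) j" if "j \<le> k" for j
      using gap_dl[of t I y j] t y that by (auto simp: k_def)
    have "Cnt (bpart \<beta>) (dl y \<circ> Npart I) k b (N - 1) = Cnt (bpart \<beta>) (Npart (I[t := I!t - 1])) k b (N - 1)"
      by (rule Cnt_cong) (simp add: e)
    moreover have "N - 1 = Npart (I[t := I!t - 1]) k"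
      using e[of k] y t unfolding N_def dl_def using Npart_mono[of "Suc t" k I] by (auto simp: k_def)
    ultimately show ?thesis using cstir_Cnt[of \<beta> "I[t := I!t - 1]"] lb by (simp add: b_def)
  qed
  have "(\<Sum>y\<in>{1..N} - Npart I ` {1..k}. card (Cnt (bpart \<beta>) (dl y \<circ> Npart I) k b (N - 1)))
     = (\<Sum>t<k. \<Sum>y\<in>{Npart I t<..<Npart I (Suc t)}. card (Cnt (bpart \<beta>) (dl y \<circ> Npart I) k b (N - 1)))"
    unfolding G by (rule sum.UNION_disjoint) (use disj in auto)
  also have "\<dots> = (\<Sum>t<k. I!t * cstir \<beta> (I[t := I!t - 1]))"
  proof (rule sum.cong)
    fix t assume t: "t \<in> {..<k}"
    have "(\<Sum>y\<in>{Npart I t<..<Npart I (Suc t)}. card (Cnt (bpart \<beta>) (dl y \<circ> Npart I) k b (N - 1)))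
       = (\<Sum>y\<in>{Npart I t<..<Npart I (Suc t)}. cstir \<beta> (I[t := I!t - 1]))"
      using inner t by (intro sum.cong) auto
    also have "\<dots> = I!t * cstir \<beta> (I[t := I!t - 1])"
      using Npart_Suc[of t I] t by (simp add: k_def)
    finally show "(\<Sum>y\<in>{Npart I t<..<Npart I (Suc t)}. card (Cnt (bpart \<beta>) (dl y \<circ> Npart I) k b (N - 1)))
       = I!t * cstir \<beta> (I[t := I!t - 1])" .
  qed simp
  finally show ?thesis using c1 c2 R first by (simp add: k_def N_def \<beta>_def)
qed

lemma ins_eq: "insert (Suc N) X = {1..Suc N} \<Longrightarrow> X \<subseteq> {1..(N::nat)} \<Longrightarrow> X = {1..N}"
proof
  assume h: "insert (Suc N) X = {1..Suc N}"
  show "{1..N} \<subseteq> X"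
  proof
    fix x assume x: "x \<in> {1..N}"
    then have "x \<in> insert (Suc N) X" using h by auto
    then show "x \<in> X" using x by auto
  qed
qed

lemma Npart_app: "j \<le> length xs \<Longrightarrow> Npart (xs @ ys) j = Npart xs j"
  by (simp add: Npart_def)

lemma Zlist:
  assumes len: "length I = length bs"
  shows "cstir (bs @ [0]) (I @ [i]) = (if i = 0 then cstir bs I else 0)"
proof -
  define k where "k = length bs"
  define b where "b = bpart bs k"
  define N where "N = Npart I k"
  define S where "S = Cnt (bpart (bs @ [0])) (Npart (I @ [i])) (Suc k) b (N + Suc i)"
  have bS: "bpart (bs @ [0]) (Suc k) = b" using bpart_app_len[of bs 0] by (simp add: k_def b_def)
  have NS: "Npart (I @ [i]) (Suc k) = N + Suc i"
    using Npart_Suc[of k "I @ [i]"] Npart_app[of k I "[i]"] len by (simp add: k_def N_def nth_append)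
  have c: "cstir (bs @ [0]) (I @ [i]) = card S"
    using cstir_Cnt[of "bs @ [0]" "I @ [i]"] bS NS by (simp add: S_def k_def)
  have bj: "bpart (bs @ [0]) j = bpart bs j" if "j \<le> k" for j using that bpart_app by (simp add: k_def)
  have Nj: "Npart (I @ [i]) j = Npart I j" if "j \<le> k" for j using that Npart_app len by (simp add: k_def)
  have marks: "Npart (I @ [i]) ` {1..Suc k} = insert (N + Suc i) (Npart I ` {1..k})"
  proof -
    have "{1..Suc k} = insert (Suc k) {1..k}" by auto
    moreover have "Npart (I @ [i]) ` {1..k} = Npart I ` {1..k}" using Nj by (intro image_cong) auto
    ultimately show ?thesis using NS by simp
  qed
  have mN: "Npart I ` {1..k} \<subseteq> {1..N}"
  proof
    fix w assume "w \<in> Npart I ` {1..k}"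
    then obtain j where j: "j \<in> {1..k}" "w = Npart I j" by blast
    then have "Npart I 0 < Npart I j" "Npart I j \<le> N"
      using len Npart_smono[of 0 j I] Npart_mono[of j k I] by (auto simp: k_def N_def)
    then show "w \<in> {1..N}" using j by auto
  qed
  have fb: "f ` {1..b} \<subseteq> {1..N}" if f: "f \<in> S" for f
  proof (cases "k = 0")
    case True
    then show ?thesis by (simp add: b_def bpart_def)
  next
    case False
    then have "k \<in> {1..Suc k}" by auto
    then have "f ` {1..bpart (bs @ [0]) k} \<subseteq> {1..Npart (I @ [i]) k}" using f unfolding S_def Cnt_def by blast
    then show ?thesis using bj[of k] Nj[of k] by (simp add: b_def N_def)
  qed
  show ?thesis
  proof (cases "i = 0")
    case False
    have "S = {}"
    proof (rule ccontr)
      assume "S \<noteq> {}"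
      then obtain f where f: "f \<in> S" by blast
      then have "f ` {1..b} \<union> Npart (I @ [i]) ` {1..Suc k} = {1..N + Suc i}" unfolding S_def Cnt_def by blast
      moreover have "Suc N \<in> {1..N + Suc i}" by simp
      moreover have "Suc N \<notin> f ` {1..b}" using fb[OF f] by auto
      moreover have "Suc N \<notin> Npart (I @ [i]) ` {1..Suc k}" using marks mN False by auto
      ultimately show False by blast
    qed
    then show ?thesis using c False by simp
  next
    case True
    have "S = Cnt (bpart bs) (Npart I) k b N"
    proof
      show "S \<subseteq> Cnt (bpart bs) (Npart I) k b N"
      proof
        fix f assume f: "f \<in> S"
        have fe: "f \<in> {1..b} \<rightarrow>\<^sub>E {1..N}" using f fb[OF f] unfolding S_def Cnt_def by (auto simp: PiE_def)
        have con: "\<forall>j\<in>{1..k}. f ` {1..bpart bs j} \<subseteq> {1..Npart I j}"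
        proof
          fix j assume j: "j \<in> {1..k}"
          then have "j \<in> {1..Suc k}" by auto
          then have "f ` {1..bpart (bs @ [0]) j} \<subseteq> {1..Npart (I @ [i]) j}" using f unfolding S_def Cnt_def by blast
          then show "f ` {1..bpart bs j} \<subseteq> {1..Npart I j}" using bj Nj j by auto
        qed
        have "f ` {1..b} \<union> Npart (I @ [i]) ` {1..Suc k} = {1..N + Suc i}" using f unfolding S_def Cnt_def by blast
        then have "insert (Suc N) (f ` {1..b} \<union> Npart I ` {1..k}) = {1..Suc N}" using marks True by auto
        moreover have "f ` {1..b} \<union> Npart I ` {1..k} \<subseteq> {1..N}" using fb[OF f] mN by auto
        ultimately have "f ` {1..b} \<union> Npart I ` {1..k} = {1..N}" by (rule ins_eq)
        then show "f \<in> Cnt (bpart bs) (Npart I) k b N" using fe con unfolding Cnt_def by blast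
      qed
      show "Cnt (bpart bs) (Npart I) k b N \<subseteq> S"
      proof
        fix f assume f: "f \<in> Cnt (bpart bs) (Npart I) k b N"
        have fe0: "f \<in> {1..b} \<rightarrow>\<^sub>E {1..N}" using f unfolding Cnt_def by blast
        then have fe: "f \<in> {1..b} \<rightarrow>\<^sub>E {1..N + Suc i}" by (auto simp: PiE_def Pi_def)
        have fb2: "f ` {1..b} \<subseteq> {1..N}" using fe0 by auto
        have con: "\<forall>j\<in>{1..Suc k}. f ` {1..bpart (bs @ [0]) j} \<subseteq> {1..Npart (I @ [i]) j}"
        proof
          fix j assume j: "j \<in> {1..Suc k}"
          show "f ` {1..bpart (bs @ [0]) j} \<subseteq> {1..Npart (I @ [i]) j}"
          proof (cases "j \<le> k")
            case True
            then have "f ` {1..bpart bs j} \<subseteq> {1..Npart I j}" using f j unfolding Cnt_def by auto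
            then show ?thesis using bj Nj True by auto
          next
            case False
            then have "j = Suc k" using j by auto
            then show ?thesis using bS NS fb2 by auto
          qed
        qed
        have "f ` {1..b} \<union> Npart I ` {1..k} = {1..N}" using f unfolding Cnt_def by blast
        then have "f ` {1..b} \<union> Npart (I @ [i]) ` {1..Suc k} = {1..N + Suc i}" using marks True by auto
        then show "f \<in> S" using fe con unfolding S_def Cnt_def by blast
      qed
    qed
    then show ?thesis using c True cstir_Cnt[of bs I] len by (simp add: k_def b_def N_def)
  qed
qed

definition ok :: "nat list \<Rightarrow> nat list \<Rightarrow> bool" where
  "ok bs I = (\<forall>j<length bs. sum_list (drop j I) \<le> sum_list (drop j bs))"

lemma drop_upd_ge:
  assumes t: "t < length (xs::nat list)"
  shows "sum_list (drop j xs) \<le> sum_list (drop j (xs[t := xs!t - 1])) + 1"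
proof (cases "t < j")
  case True
  then have "drop j (xs[t := xs!t - 1]) = drop j xs" by (simp add: drop_update_cancel)
  then show ?thesis by simp
next
  case False
  define ys where "ys = drop j xs"
  have k: "t - j < length ys" using t False by (simp add: ys_def)
  have yk: "ys ! (t - j) = xs ! t" using t False by (simp add: ys_def)
  have "drop j (xs[t := xs!t - 1]) = ys[t - j := xs!t - 1]" using False by (simp add: drop_update_swap ys_def)
  moreover have "sum_list (ys[t - j := xs!t - 1]) = sum_list ys + (xs!t - 1) - ys ! (t - j)"
    using k by (rule sum_list_update)
  moreover have "ys ! (t - j) \<le> sum_list ys" using k by (rule elem_le_sum_list)
  ultimately show ?thesis using yk by (simp add: ys_def[symmetric])
qed

lemma sl_drop_snoc: "j \<le> length bs \<Longrightarrow> sum_list (drop j (bs @ [x])) = sum_list (drop j bs) + x"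
  by (simp add: drop_append)

lemma V: "length I = length bs \<Longrightarrow> \<not> ok bs I \<Longrightarrow> cstir bs I = 0"
proof (induction bs arbitrary: I rule: rev_induct)
  case Nil
  then show ?case by (simp add: ok_def)
next
  case (snoc x bs)
  have "cstir (bs @ [m]) I = 0" if "length I = Suc (length bs)" "\<not> ok (bs @ [m]) I" for m I
    using that
  proof (induction m arbitrary: I)
    case 0
    obtain I' i where I: "I = I' @ [i]" using 0 by (metis length_Suc_conv_rev)
    have len: "length I' = length bs" using 0 I by simp
    show ?case
    proof (cases "i = 0")
      case True
      obtain j where j: "j < Suc (length bs)" "sum_list (drop j I) > sum_list (drop j (bs @ [0]))"
        using 0 by (auto simp: ok_def not_le)
      have "j < length bs"
      proof (rule ccontr)
        assume "\<not> j < length bs"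
        then have "j = length bs" using j by simp
        then show False using j I len True by simp
      qed
      then have "sum_list (drop j I') > sum_list (drop j bs)" using j I True len by (simp add: drop_append)
      then have "\<not> ok bs I'" using \<open>j < length bs\<close> by (auto simp: ok_def)
      then show ?thesis using snoc.IH[OF len] Zlist[OF len] I True by simp
    next
      case False
      then show ?thesis using Zlist[OF len] I by simp
    qed
  next
    case (Suc m)
    obtain j where j: "j < Suc (length bs)" "sum_list (drop j I) > sum_list (drop j (bs @ [Suc m]))"
      using Suc.prems by (auto simp: ok_def not_le)
    have jb: "j \<le> length bs" using j by simp
    have gt: "sum_list (drop j I) > sum_list (drop j (bs @ [m])) + 1"
      using j(2) sl_drop_snoc[OF jb, of "Suc m"] sl_drop_snoc[OF jb, of m] by simp
    have z1: "cstir (bs @ [m]) I = 0"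
    proof (rule Suc.IH[OF Suc.prems(1)])
      show "\<not> ok (bs @ [m]) I" using gt j by (auto simp: ok_def not_le)
    qed
    have z2: "I!t * cstir (bs @ [m]) (I[t := I!t - 1]) = 0" if t: "t < length I" for t
    proof -
      have "sum_list (drop j I) \<le> sum_list (drop j (I[t := I!t - 1])) + 1" using t by (rule drop_upd_ge)
      then have "\<not> ok (bs @ [m]) (I[t := I!t - 1])" using gt j by (auto simp: ok_def not_le)
      then have "cstir (bs @ [m]) (I[t := I!t - 1]) = 0" using Suc.IH Suc.prems(1) by simp
      then show ?thesis by simp
    qed
    show ?case using Rlist[OF Suc.prems(1), of m] z1 z2 by simp
  qed
  then show ?case using snoc.prems by simp
qed

definition dd :: "nat list \<Rightarrow> nat \<Rightarrow> nat" where
  "dd n j = n ! j - (if j = 0 then 0 else n ! (j - 1)) - 1"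

definition Box :: "nat list \<Rightarrow> nat list set" where
  "Box n = {I. length I = length n \<and> (\<forall>j<length n. I ! j \<le> dd n j)}"

definition W :: "nat list \<Rightarrow> nat list \<Rightarrow> nat" where
  "W n I = (\<Prod>j<length n. dd n j choose (I ! j))"

lemma dd_le: "j < length n \<Longrightarrow> dd n j \<le> sum_list n"
  using elem_le_sum_list[of j n] by (simp add: dd_def)

lemma finite_Box: "finite (Box n)"
proof (rule finite_subset)
  show "Box n \<subseteq> {xs. set xs \<subseteq> {0..sum_list n} \<and> length xs = length n}"
  proof
    fix I assume I: "I \<in> Box n"
    have "I ! j \<le> sum_list n" if "j < length I" for j
      using I that dd_le[of j n] unfolding Box_def by force
    then show "I \<in> {xs. set xs \<subseteq> {0..sum_list n} \<and> length xs = length n}"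
      using I unfolding Box_def by (auto simp: in_set_conv_nth)
  qed
  show "finite {xs. set xs \<subseteq> {0..sum_list n} \<and> length xs = length n}"
    by (rule finite_lists_length_eq) simp
qed

lemma W_split: "t < length n \<Longrightarrow> W n I = (dd n t choose (I ! t)) * (\<Prod>j\<in>{..<length n} - {t}. dd n j choose (I ! j))"
  unfolding W_def by (rule prod.remove) auto

lemma binom_shift: "Suc j * (d choose Suc j) = (d - j) * (d choose j)"
  using binomial_absorption[of j d] binomial_absorb_comp[of d j] by simp

lemma shift:
  assumes t: "t < length n"
  shows "(\<Sum>I\<in>Box n. I!t * g (I[t := I!t - 1]) * W n I) = (\<Sum>I\<in>Box n. (dd n t - I!t) * g I * W n I)"
proof -
  let ?R = "\<lambda>I. (\<Prod>j\<in>{..<length n} - {t}. dd n j choose (I ! j))"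
  let ?d = "dd n t"
  have key: "(J[t := J ! t + 1]) ! t * g ((J[t := J ! t + 1])[t := (J[t := J ! t + 1]) ! t - 1]) * W n (J[t := J ! t + 1])
        = (?d - J!t) * g J * W n J" if J: "J \<in> Box n \<inter> {J. J!t < ?d}" for J
  proof -
    have lJ: "length J = length n" using J by (simp add: Box_def)
    have RR: "?R (J[t := J ! t + 1]) = ?R J" by (intro prod.cong) auto
    have e1: "J[t := J ! t + 1] ! t = Suc (J ! t)" using t lJ by simp
    have e2: "(J[t := J ! t + 1])[t := (J[t := J ! t + 1]) ! t - 1] = J" using t lJ by simp
    have e3: "W n (J[t := J ! t + 1]) = (?d choose Suc (J!t)) * ?R J"
      using W_split[OF t, of "J[t := J ! t + 1]"] e1 RR by simp
    have "(J[t := J ! t + 1]) ! t * g ((J[t := J ! t + 1])[t := (J[t := J ! t + 1]) ! t - 1]) * W n (J[t := J ! t + 1])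
        = Suc (J!t) * g J * ((?d choose Suc (J!t)) * ?R J)"
      by (subst e2, subst e3, subst e1, rule refl)
    also have "\<dots> = (Suc (J!t) * (?d choose Suc (J!t))) * g J * ?R J" by (simp only: mult_ac)
    also have "\<dots> = ((?d - J!t) * (?d choose J!t)) * g J * ?R J" by (simp only: binom_shift)
    also have "\<dots> = (?d - J!t) * g J * W n J" unfolding W_split[OF t, of J] by (simp only: mult_ac)
    finally show ?thesis .
  qed
  have "(\<Sum>I\<in>Box n. I!t * g (I[t := I!t - 1]) * W n I) = (\<Sum>I\<in>Box n \<inter> {I. I!t \<ge> 1}. I!t * g (I[t := I!t - 1]) * W n I)"
    by (rule sum.mono_neutral_right) (auto simp: finite_Box)
  also have "\<dots> = (\<Sum>J\<in>Box n \<inter> {J. J!t < ?d}. (?d - J!t) * g J * W n J)"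
  proof (rule sum.reindex_bij_witness[where j = "\<lambda>I. I[t := I!t - 1]" and i = "\<lambda>J. J[t := J!t + 1]"])
    fix I assume I: "I \<in> Box n \<inter> {I. I!t \<ge> 1}"
    then have lI: "length I = length n" by (simp add: Box_def)
    show e: "(I[t := I ! t - 1])[t := (I[t := I ! t - 1]) ! t + 1] = I" using I t lI by auto
    show T: "I[t := I ! t - 1] \<in> Box n \<inter> {J. J ! t < ?d}"
      using I t lI unfolding Box_def by (auto simp: nth_list_update)
    have e2: "((I[t := I ! t - 1])[t := (I[t := I ! t - 1]) ! t + 1])[t := ((I[t := I ! t - 1])[t := (I[t := I ! t - 1]) ! t + 1]) ! t - 1] = I[t := I ! t - 1]"
      using t lI by simp
    show "(?d - I[t := I ! t - 1] ! t) * g (I[t := I ! t - 1]) * W n (I[t := I ! t - 1]) =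
          I ! t * g (I[t := I ! t - 1]) * W n I"
      using key[OF T] unfolding e by (rule sym)
  next
    fix J assume J: "J \<in> Box n \<inter> {J. J!t < ?d}"
    then have lJ: "length J = length n" by (simp add: Box_def)
    show "(J[t := J ! t + 1])[t := (J[t := J ! t + 1]) ! t - 1] = J" using J t lJ by auto
    show "J[t := J ! t + 1] \<in> Box n \<inter> {I. 1 \<le> I ! t}"
      using J t lJ unfolding Box_def by (auto simp: nth_list_update)
  qed
  also have "\<dots> = (\<Sum>J\<in>Box n. (?d - J!t) * g J * W n J)"
  proof (rule sum.mono_neutral_left)
    show "\<forall>J\<in>Box n - Box n \<inter> {J. J ! t < ?d}. (?d - J ! t) * g J * W n J = 0"
      using t by (auto simp: Box_def)
  qed (auto simp: finite_Box)
  finally show ?thesis .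
qed

lemma tele:
  assumes s: "sorted_wrt (<) n" and p: "\<forall>x\<in>set n. 0 < x" and K: "1 \<le> K" "K \<le> length n"
  shows "(\<Sum>t<K. dd n t + 1) = n ! (K - 1)"
  using K
proof (induction K)
  case 0
  then show ?case by simp
next
  case (Suc K)
  show ?case
  proof (cases "K = 0")
    case True
    have "n ! 0 \<in> set n" using Suc.prems by (cases n) auto
    then have "n ! 0 > 0" using p by auto
    then show ?thesis using True by (simp add: dd_def)
  next
    case False
    have IH: "(\<Sum>t<K. dd n t + 1) = n ! (K - 1)" using Suc False by simp
    have "n ! (K - 1) < n ! K" using sorted_wrt_nth_less[OF s, of "K - 1" K] Suc.prems False by auto
    then show ?thesis using IH False by (simp add: dd_def)
  qed
qed

lemma dd_snoc: "j < length n' \<Longrightarrow> dd (n' @ [z]) j = dd n' j"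
  by (simp add: dd_def nth_append)

lemma Box_snoc_sum:
  "(\<Sum>I\<in>Box (n' @ [z]). F I) = (\<Sum>I'\<in>Box n'. \<Sum>i\<le>dd (n' @ [z]) (length n'). F (I' @ [i]))"
proof -
  let ?D = "dd (n' @ [z]) (length n')"
  have "(\<Sum>I'\<in>Box n'. \<Sum>i\<le>?D. F (I' @ [i])) = (\<Sum>(I', i)\<in>Box n' \<times> {..?D}. F (I' @ [i]))"
    by (rule sum.cartesian_product)
  also have "\<dots> = (\<Sum>I\<in>Box (n' @ [z]). F I)"
  proof (rule sum.reindex_bij_witness[where i = "\<lambda>I. (butlast I, last I)" and j = "\<lambda>(I', i). I' @ [i]"])
    fix a assume a: "a \<in> Box n' \<times> {..?D}"
    then show "(butlast (case a of (I', i) \<Rightarrow> I' @ [i]), last (case a of (I', i) \<Rightarrow> I' @ [i])) = a" by auto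
    show "(case a of (I', i) \<Rightarrow> I' @ [i]) \<in> Box (n' @ [z])"
      using a unfolding Box_def by (auto simp: nth_append dd_snoc less_Suc_eq)
    show "F (case a of (I', i) \<Rightarrow> I' @ [i]) = (case a of (I', i) \<Rightarrow> F (I' @ [i]))" by (cases a) simp
  next
    fix b assume b: "b \<in> Box (n' @ [z])"
    then have lb: "length b = Suc (length n')" by (simp add: Box_def)
    then have bne: "b \<noteq> []" by auto
    show "(case (butlast b, last b) of (I', i) \<Rightarrow> I' @ [i]) = b" using bne by simp
    have h: "\<forall>j<Suc (length n'). b ! j \<le> dd (n' @ [z]) j" using b by (simp add: Box_def)
    have "butlast b ! j \<le> dd n' j" if "j < length n'" for j
      using h[rule_format, of j] that lb by (simp add: nth_butlast dd_snoc)
    moreover have "last b \<le> ?D" using h[rule_format, of "length n'"] lb bne by (simp add: last_conv_nth)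
    ultimately show "(butlast b, last b) \<in> Box n' \<times> {..?D}" using lb by (simp add: Box_def)
  qed
  finally show ?thesis by simp
qed

lemma W_snoc: "length I' = length n' \<Longrightarrow> W (n' @ [z]) (I' @ [i]) = W n' I' * (dd (n' @ [z]) (length n') choose i)"
  unfolding W_def by (simp add: nth_append dd_snoc)

lemma cstir_nil: "cstir [] [] = 1"
proof -
  have "{f \<in> {1..0::nat} \<rightarrow>\<^sub>E {1..0::nat}. True} = {\<lambda>_. undefined}" by auto
  then show ?thesis unfolding cstir_def by (simp add: bpart_def Npart_def)
qed

lemma main:
  "length n = length bs \<Longrightarrow> sorted_wrt (<) n \<Longrightarrow> \<forall>x\<in>set n. 0 < x \<Longrightarrow>
   (\<Prod>j<length bs. (n ! j) ^ (bs ! j)) = (\<Sum>I\<in>Box n. cstir bs I * W n I)"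
proof (induction bs arbitrary: n rule: rev_induct)
  case Nil
  then have "n = []" by simp
  moreover have "Box [] = {[]}" by (auto simp: Box_def)
  ultimately show ?case by (simp add: W_def cstir_nil)
next
  case (snoc x bs)
  obtain n' z where n: "n = n' @ [z]" using snoc.prems(1) by (metis length_Suc_conv_rev length_append_singleton)
  have ln': "length n' = length bs" using snoc.prems(1) n by simp
  have s': "sorted_wrt (<) n'" using snoc.prems(2) n by (simp add: sorted_wrt_append)
  have p': "\<forall>x\<in>set n'. 0 < x" using snoc.prems(3) n by simp
  have IH: "(\<Prod>j<length bs. (n' ! j) ^ (bs ! j)) = (\<Sum>I\<in>Box n'. cstir bs I * W n' I)"
    using snoc.IH[OF ln' s' p'] .
  define k where "k = length bs"
  define D where "D = dd n k"
  have lhs: "(\<Prod>j<length (bs @ [m]). (n ! j) ^ ((bs @ [m]) ! j)) = (\<Prod>j<length bs. (n' ! j) ^ (bs ! j)) * z ^ m" for m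
  proof -
    have "(\<Prod>j<length (bs @ [m]). (n ! j) ^ ((bs @ [m]) ! j)) = (\<Prod>j<k. (n ! j) ^ ((bs @ [m]) ! j)) * (n ! k) ^ ((bs @ [m]) ! k)"
      by (simp add: k_def)
    also have "(\<Prod>j<k. (n ! j) ^ ((bs @ [m]) ! j)) = (\<Prod>j<k. (n' ! j) ^ (bs ! j))"
      by (intro prod.cong) (auto simp: n nth_append k_def ln')
    finally show ?thesis using ln' by (simp add: n k_def nth_append)
  qed
  have step: "(\<Prod>j<length (bs @ [m]). (n ! j) ^ ((bs @ [m]) ! j)) = (\<Sum>I\<in>Box n. cstir (bs @ [m]) I * W n I)" for m
  proof (induction m)
    case 0
    have "(\<Sum>I\<in>Box n. cstir (bs @ [0]) I * W n I) = (\<Sum>I'\<in>Box n'. \<Sum>i\<le>D. cstir (bs @ [0]) (I' @ [i]) * W n (I' @ [i]))"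
      unfolding n D_def k_def using Box_snoc_sum[where n'=n' and z=z] ln' by simp
    also have "\<dots> = (\<Sum>I'\<in>Box n'. cstir bs I' * W n' I')"
    proof (rule sum.cong)
      fix I' assume I': "I' \<in> Box n'"
      then have lI': "length I' = length bs" using ln' by (simp add: Box_def)
      have "(\<Sum>i\<le>D. cstir (bs @ [0]) (I' @ [i]) * W n (I' @ [i])) = (\<Sum>i\<le>D. if i = 0 then cstir bs I' * W n' I' else 0)"
        using Zlist[OF lI'] W_snoc[of I' n' z] lI' ln' by (intro sum.cong) (auto simp: n D_def k_def)
      also have "\<dots> = cstir bs I' * W n' I'" by simp
      finally show "(\<Sum>i\<le>D. cstir (bs @ [0]) (I' @ [i]) * W n (I' @ [i])) = cstir bs I' * W n' I'" .
    qed simp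
    finally show ?case using lhs[of 0] IH by simp
  next
    case (Suc m)
    let ?c = "cstir (bs @ [m])"
    let ?K = "length n"
    have lK: "?K = Suc (length bs)" using snoc.prems(1) by simp
    have "(\<Sum>I\<in>Box n. cstir (bs @ [Suc m]) I * W n I) =
        (\<Sum>I\<in>Box n. Npart I ?K * ?c I * W n I + (\<Sum>t<?K. I!t * ?c (I[t := I!t - 1]) * W n I))"
    proof (rule sum.cong)
      fix I assume I: "I \<in> Box n"
      then have lI: "length I = Suc (length bs)" using lK by (simp add: Box_def)
      show "cstir (bs @ [Suc m]) I * W n I = Npart I ?K * ?c I * W n I + (\<Sum>t<?K. I!t * ?c (I[t := I!t - 1]) * W n I)"
      proof -
        have lI2: "length I = ?K" using lI lK by simp
        have r: "cstir (bs @ [Suc m]) I = Npart I ?K * ?c I + (\<Sum>t<?K. I!t * ?c (I[t := I!t - 1]))"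
          using Rlist[OF lI, of m] by (simp only: lI2)
        show ?thesis by (simp only: r distrib_right sum_distrib_right)
      qed
    qed simp
    also have "\<dots> = (\<Sum>I\<in>Box n. Npart I ?K * ?c I * W n I) + (\<Sum>t<?K. \<Sum>I\<in>Box n. I!t * ?c (I[t := I!t - 1]) * W n I)"
      by (simp add: sum.distrib sum.swap[of _ "{..<?K}"])
    also have "(\<Sum>t<?K. \<Sum>I\<in>Box n. I!t * ?c (I[t := I!t - 1]) * W n I) = (\<Sum>t<?K. \<Sum>I\<in>Box n. (dd n t - I!t) * ?c I * W n I)"
      by (intro sum.cong refl shift) simp
    also have "(\<Sum>I\<in>Box n. Npart I ?K * ?c I * W n I) + (\<Sum>t<?K. \<Sum>I\<in>Box n. (dd n t - I!t) * ?c I * W n I)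
        = (\<Sum>I\<in>Box n. Npart I ?K * ?c I * W n I + (\<Sum>t<?K. (dd n t - I!t) * ?c I * W n I))"
      by (subst sum.swap) (rule sum.distrib[symmetric])
    also have "\<dots> = (\<Sum>I\<in>Box n. (Npart I ?K + (\<Sum>t<?K. dd n t - I!t)) * ?c I * W n I)"
      by (simp only: distrib_right sum_distrib_right)
    also have "\<dots> = (\<Sum>I\<in>Box n. z * (?c I * W n I))"
    proof (rule sum.cong)
      fix I assume I: "I \<in> Box n"
      then have lI: "length I = ?K" and le: "\<forall>t<?K. I!t \<le> dd n t" by (auto simp: Box_def)
      have "Npart I ?K + (\<Sum>t<?K. dd n t - I!t) = (\<Sum>t<?K. Suc (I!t)) + (\<Sum>t<?K. dd n t - I!t)"
        using Npart_sum[of ?K I] lI by simp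
      also have "\<dots> = (\<Sum>t<?K. dd n t + 1)" unfolding sum.distrib[symmetric] using le by (intro sum.cong) auto
      also have "\<dots> = n ! (?K - 1)" using tele[OF snoc.prems(2) snoc.prems(3), of ?K] lK by simp
      also have "\<dots> = z" using n by simp
      finally show "(Npart I ?K + (\<Sum>t<?K. dd n t - I!t)) * ?c I * W n I = z * (?c I * W n I)" by simp
    qed simp
    also have "\<dots> = z * (\<Sum>I\<in>Box n. ?c I * W n I)" by (simp add: sum_distrib_left)
    finally show ?case using Suc.IH lhs[of m] lhs[of "Suc m"] by simp
  qed
  then show ?case by blast
qed

theorem lemma5p3:
  fixes beta n :: "nat list"
  assumes "length n = length beta"
    and "sorted_wrt (<) n"
    and "\<forall>x\<in>set n. 0 < x"
  shows "(\<Prod>j<length beta. (n ! j) ^ (beta ! j)) =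
    (\<Sum>I\<in>{I. length I = length beta \<and>
              (\<forall>j<length beta. sum_list (drop j I) \<le> sum_list (drop j beta))}.
       cstir beta I *
       (\<Prod>j<length beta. (n ! j - (if j = 0 then 0 else n ! (j - 1)) - 1) choose (I ! j)))"
proof -
  let ?C = "{I. length I = length beta \<and> (\<forall>j<length beta. sum_list (drop j I) \<le> sum_list (drop j beta))}"
  have Wn: "(\<Prod>j<length beta. (n ! j - (if j = 0 then 0 else n ! (j - 1)) - 1) choose (I ! j)) = W n I" for I
    unfolding W_def dd_def using assms(1) by simp
  have finC: "finite ?C"
  proof (rule finite_subset)
    show "?C \<subseteq> {xs. set xs \<subseteq> {0..sum_list beta} \<and> length xs = length beta}"
    proof
      fix I assume I: "I \<in> ?C"
      have "x \<le> sum_list beta" if x: "x \<in> set I" for x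
      proof -
        have "length beta > 0" using x I by (cases I) auto
        then have "sum_list I \<le> sum_list beta" using I by (metis (mono_tags, lifting) drop0 mem_Collect_eq)
        moreover obtain i where "i < length I" "x = I ! i" using x by (metis in_set_conv_nth)
        then have "x \<le> sum_list I" by (simp add: elem_le_sum_list)
        ultimately show ?thesis by simp
      qed
      then show "I \<in> {xs. set xs \<subseteq> {0..sum_list beta} \<and> length xs = length beta}" using I by auto
    qed
    show "finite {xs. set xs \<subseteq> {0..sum_list beta} \<and> length xs = length beta}"
      by (rule finite_lists_length_eq) simp
  qed
  have "(\<Sum>I\<in>?C. cstir beta I * W n I) = (\<Sum>I\<in>?C \<inter> Box n. cstir beta I * W n I)"
  proof (rule sum.mono_neutral_right)
    show "\<forall>I\<in>?C - ?C \<inter> Box n. cstir beta I * W n I = 0"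
    proof
      fix I assume I: "I \<in> ?C - ?C \<inter> Box n"
      then obtain j where j: "j < length n" "I ! j > dd n j" using assms(1) by (auto simp: Box_def not_le)
      have "W n I = 0" unfolding W_def using j by (intro prod_zero) auto
      then show "cstir beta I * W n I = 0" by simp
    qed
  qed (use finC in auto)
  also have "\<dots> = (\<Sum>I\<in>Box n. cstir beta I * W n I)"
  proof (rule sum.mono_neutral_left)
    show "\<forall>I\<in>Box n - ?C \<inter> Box n. cstir beta I * W n I = 0"
    proof
      fix I assume I: "I \<in> Box n - ?C \<inter> Box n"
      then have l: "length I = length beta" using assms(1) by (simp add: Box_def)
      then have "\<not> ok beta I" using I by (auto simp: ok_def)
      then show "cstir beta I * W n I = 0" using V[OF l] by simp
    qed
  qed (auto simp: finite_Box)
  finally show ?thesis using main[OF assms] Wn by simp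
qed

end
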